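(* Let $G$ be a graph, let $s\ge3$ be an integer, and let $xTy$ be a thread of $G$ (possibly $x=y$, when $T$ is a cycle-thread). Let $T'$ be the path obtained from $T$ by deleting its end-vertices $x,y$ (for a cycle-thread, by deleting the single vertex $x=y$), and let $G'=G-V(T')$. Then: (a1) if $s\ge4$ and $e(T)\ge 4$, then $\lambda(G')\ge v(G')/(s+1)$ implies $\lambda(G)\ge v(G)/(s+1)$; (a2) if $s=3$ and $v(T')\in\{3m,3m+1\}$ for some integer $m\ge1$, then $\lambda(G')\ge v(G')/4$ implies $\lambda(G)\ge v(G)/4$.
   Context: All graphs are finite and simple. $v(G)$, $e(G)$ are the numbers of vertices and edges. $\lambda(G)$ denotes the maximum number of pairwise vertex-disjoint subgraphs of $G$ each of which is a path with exactly two edges. A path-thread of $G$ is a path $P$ in $G$, maximal under inclusion among paths, such that every internal vertex of $P$ has degree $2$ in $G$; its end-vertices are $x,y$, written $xPy$. A cycle-thread of $G$ is a cycle $C$ of $G$ in which all vertices except exactly one have degree $2$ in $G$; both "end-vertices" $x=y$ of it are this exceptional vertex. A thread is a path-thread or a cycle-thread. *)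

theory Defs
  imports Complex_Main "HOL-Library.Disjoint_Sets"
begin

definition graph :: "'a set \<Rightarrow> 'a set set \<Rightarrow> bool" where
  "graph V E \<longleftrightarrow> finite V \<and> (\<forall>e\<in>E. \<exists>u v. e = {u, v} \<and> u \<noteq> v \<and> u \<in> V \<and> v \<in> V)"

definition deg :: "'a set \<Rightarrow> 'a set set \<Rightarrow> 'a \<Rightarrow> nat" where
  "deg V E u = card {v \<in> V. {u, v} \<in> E}"

definition del_verts :: "'a set \<Rightarrow> 'a set set \<Rightarrow> 'a set \<Rightarrow> 'a set" where
  "del_verts V E X = V - X"
definition del_edges :: "'a set \<Rightarrow> 'a set set \<Rightarrow> 'a set \<Rightarrow> 'a set set" where
  "del_edges V E X = {e \<in> E. e \<inter> X = {}}"

definition is_P3 :: "'a set set \<Rightarrow> 'a set \<Rightarrow> bool" where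
  "is_P3 E S \<longleftrightarrow> (\<exists>a b c. S = {a, b, c} \<and> distinct [a, b, c] \<and> {a, b} \<in> E \<and> {b, c} \<in> E)"

definition P3_packing :: "'a set \<Rightarrow> 'a set set \<Rightarrow> 'a set set \<Rightarrow> bool" where
  "P3_packing V E P \<longleftrightarrow> (\<forall>S\<in>P. S \<subseteq> V \<and> is_P3 E S) \<and> disjoint P"

definition lambda :: "'a set \<Rightarrow> 'a set set \<Rightarrow> nat" where
  "lambda V E = Max {card P | P. P3_packing V E P}"

definition is_path :: "'a set \<Rightarrow> 'a set set \<Rightarrow> 'a list \<Rightarrow> bool" where
  "is_path V E p \<longleftrightarrow> p \<noteq> [] \<and> distinct p \<and> set p \<subseteq> V \<and>
     (\<forall>i. Suc i < length p \<longrightarrow> {p ! i, p ! Suc i} \<in> E)"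

definition path_edges :: "'a list \<Rightarrow> 'a set set" where
  "path_edges p = {{p ! i, p ! Suc i} | i. Suc i < length p}"

definition path_sub :: "'a list \<Rightarrow> 'a list \<Rightarrow> bool" where
  "path_sub p q \<longleftrightarrow> set p \<subseteq> set q \<and> path_edges p \<subseteq> path_edges q"

definition internal :: "'a list \<Rightarrow> 'a set" where
  "internal p = set (tl (butlast p))"

definition deg2_path :: "'a set \<Rightarrow> 'a set set \<Rightarrow> 'a list \<Rightarrow> bool" where
  "deg2_path V E p \<longleftrightarrow> is_path V E p \<and> (\<forall>v\<in>internal p. deg V E v = 2)"

definition path_thread :: "'a set \<Rightarrow> 'a set set \<Rightarrow> 'a list \<Rightarrow> bool" where
  "path_thread V E p \<longleftrightarrow> deg2_path V E p \<and>
     (\<forall>q. deg2_path V E q \<and> path_sub p q \<longrightarrow> path_sub q p)"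

definition is_cycle :: "'a set \<Rightarrow> 'a set set \<Rightarrow> 'a list \<Rightarrow> bool" where
  "is_cycle V E c \<longleftrightarrow> length c \<ge> 3 \<and> distinct c \<and> set c \<subseteq> V \<and>
     (\<forall>i. Suc i < length c \<longrightarrow> {c ! i, c ! Suc i} \<in> E) \<and> {last c, hd c} \<in> E"

text \<open>Cycle-thread, listed starting from its exceptional vertex hd c.\<close>
definition cycle_thread :: "'a set \<Rightarrow> 'a set set \<Rightarrow> 'a list \<Rightarrow> bool" where
  "cycle_thread V E c \<longleftrightarrow> is_cycle V E c \<and> deg V E (hd c) \<noteq> 2 \<and>
     (\<forall>v\<in>set (tl c). deg V E v = 2)"

definition thread :: "'a set \<Rightarrow> 'a set set \<Rightarrow> bool \<Rightarrow> 'a list \<Rightarrow> bool" where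
  "thread V E cyc t = (if cyc then cycle_thread V E t else path_thread V E t)"

definition thread_inner :: "bool \<Rightarrow> 'a list \<Rightarrow> 'a set" where
  "thread_inner cyc t = (if cyc then set (tl t) else internal t)"

definition thread_edges :: "bool \<Rightarrow> 'a list \<Rightarrow> nat" where
  "thread_edges cyc t = (if cyc then length t else length t - 1)"

end

theory Submission
  imports Defs
begin

lemma packing_finite: "finite V \<Longrightarrow> P3_packing V E P \<Longrightarrow> finite P"
  unfolding P3_packing_def by (meson PowI finite_Pow_iff rev_finite_subset subsetI)

lemma lambda_set_finite: "finite V \<Longrightarrow> finite {card P | P. P3_packing V E P}"
proof -
  assume f: "finite V"
  have "{card P | P. P3_packing V E P} \<subseteq> card ` Pow (Pow V)"
    unfolding P3_packing_def by auto
  then show ?thesis using f by (meson finite_Pow_iff finite_imageI rev_finite_subset)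
qed

lemma lambda_ge: "finite V \<Longrightarrow> P3_packing V E P \<Longrightarrow> card P \<le> lambda V E"
  unfolding lambda_def using lambda_set_finite by (intro Max_ge) auto

lemma lambda_attained: "finite V \<Longrightarrow> \<exists>P. P3_packing V E P \<and> card P = lambda V E"
proof -
  assume f: "finite V"
  have "P3_packing V E {}" unfolding P3_packing_def by auto
  then have "{card P | P. P3_packing V E P} \<noteq> {}" by auto
  from Max_in[OF lambda_set_finite[OF f] this] show ?thesis unfolding lambda_def by auto
qed

lemma is_P3_mono: "is_P3 E' S \<Longrightarrow> E' \<subseteq> E \<Longrightarrow> is_P3 E S"
  unfolding is_P3_def by blast

lemma is_P3_I: "distinct [a,b,c] \<Longrightarrow> {a,b} \<in> E \<Longrightarrow> {b,c} \<in> E \<Longrightarrow> is_P3 E {a,b,c}"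
  unfolding is_P3_def by blast

lemma is_P3_ne: "is_P3 E S \<Longrightarrow> S \<noteq> {}"
  unfolding is_P3_def by blast

lemma list_packing:
  "distinct xs \<Longrightarrow> set xs \<subseteq> V \<Longrightarrow> (\<forall>i. Suc i < length xs \<longrightarrow> {xs!i, xs!Suc i} \<in> E) \<Longrightarrow>
   \<exists>Q. P3_packing V E Q \<and> card Q = length xs div 3 \<and> (\<forall>S\<in>Q. S \<subseteq> set xs)"
proof (induction "length xs" arbitrary: xs rule: less_induct)
  case less
  show ?case
  proof (cases "length xs \<ge> 3")
    case False
    then show ?thesis
      by (rule_tac x="{}" in exI) (auto simp: P3_packing_def)
  next
    case True
    then obtain a b c ys where xs: "xs = a#b#c#ys"
      by (metis One_nat_def Suc_le_length_iff numeral_3_eq_3)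
    have "\<exists>Q. P3_packing V E Q \<and> card Q = length ys div 3 \<and> (\<forall>S\<in>Q. S \<subseteq> set ys)"
    proof (rule less.hyps)
      show "length ys < length xs" using xs by simp
      show "distinct ys" using less.prems xs by simp
      show "set ys \<subseteq> V" using less.prems xs by simp
      show "\<forall>i. Suc i < length ys \<longrightarrow> {ys ! i, ys ! Suc i} \<in> E"
      proof (intro allI impI)
        fix i assume "Suc i < length ys"
        then have "{xs ! (i+3), xs ! Suc (i+3)} \<in> E" using less.prems(3)[rule_format, of "i+3"] xs by simp
        then show "{ys ! i, ys ! Suc i} \<in> E" using xs by simp
      qed
    qed
    then obtain Q where Q: "P3_packing V E Q" "card Q = length ys div 3" "\<forall>S\<in>Q. S \<subseteq> set ys"
      by blast
    have ab: "{a,b} \<in> E" using less.prems(3)[rule_format, of 0] xs by simp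
    have bc: "{b,c} \<in> E" using less.prems(3)[rule_format, of 1] xs by simp
    have d: "distinct [a,b,c]" "a \<notin> set ys" "b \<notin> set ys" "c \<notin> set ys"
      using less.prems(1) xs by auto
    have notin: "{a,b,c} \<notin> Q" using Q(3) d by auto
    have "Q \<subseteq> Pow (set ys)" using Q(3) by blast
    then have fQ: "finite Q" by (meson List.finite_set finite_Pow_iff rev_finite_subset)
    have "P3_packing V E (insert {a,b,c} Q)"
      unfolding P3_packing_def
    proof (intro conjI)
      have "is_P3 E {a,b,c}" using is_P3_I[OF d(1) ab bc] .
      moreover have "{a,b,c} \<subseteq> V" using less.prems(2) xs by simp
      moreover have "\<forall>S\<in>Q. S \<subseteq> V \<and> is_P3 E S" using Q(1) unfolding P3_packing_def by blast
      ultimately show "\<forall>S\<in>insert {a, b, c} Q. S \<subseteq> V \<and> is_P3 E S" by blast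
      show "disjoint (insert {a, b, c} Q)"
      proof -
        have "disjoint Q" using Q(1) unfolding P3_packing_def by auto
        moreover have "\<And>B. B \<in> Q \<Longrightarrow> {a,b,c} \<inter> B = {}" using Q(3) d by auto
        ultimately show ?thesis unfolding pairwise_insert disjnt_def by blast
      qed
    qed
    moreover have "card (insert {a,b,c} Q) = length xs div 3"
      using fQ notin Q(2) xs by simp
    moreover have "\<forall>S\<in>insert {a,b,c} Q. S \<subseteq> set xs" using Q(3) xs by auto
    ultimately show ?thesis by blast
  qed
qed

lemma set_tl_sub: "set (tl xs) \<subseteq> set xs"
  by (cases xs) auto

lemma set_butlast_sub: "set (butlast xs) \<subseteq> set xs"
  by (auto dest: in_set_butlastD)

lemma inner_list:
  assumes "graph V E" "thread V E cyc t"
  shows "\<exists>xs. distinct xs \<and> set xs \<subseteq> V \<and> (\<forall>i. Suc i < length xs \<longrightarrow> {xs!i, xs!Suc i} \<in> E)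
     \<and> set xs = thread_inner cyc t \<and> length xs + 1 \<ge> thread_edges cyc t"
proof (cases cyc)
  case True
  then have c: "is_cycle V E t" using assms(2) unfolding thread_def cycle_thread_def by auto
  show ?thesis
  proof (rule exI[of _ "tl t"], intro conjI)
    show "distinct (tl t)" using c unfolding is_cycle_def by (simp add: distinct_tl)
    show "set (tl t) \<subseteq> V" using c set_tl_sub[of t] unfolding is_cycle_def by blast
    show "\<forall>i. Suc i < length (tl t) \<longrightarrow> {tl t ! i, tl t ! Suc i} \<in> E"
      using c unfolding is_cycle_def by (simp add: nth_tl)
    show "set (tl t) = thread_inner cyc t" using True unfolding thread_inner_def by simp
    show "length (tl t) + 1 \<ge> thread_edges cyc t" using True c unfolding thread_edges_def is_cycle_def by simp
  qed
next
  case False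
  then have c: "is_path V E t" using assms(2) unfolding thread_def path_thread_def deg2_path_def by auto
  show ?thesis
  proof (rule exI[of _ "tl (butlast t)"], intro conjI)
    show "distinct (tl (butlast t))" using c unfolding is_path_def by (simp add: distinct_tl distinct_butlast)
    show "set (tl (butlast t)) \<subseteq> V" using c set_tl_sub[of "butlast t"] set_butlast_sub[of t]
      unfolding is_path_def by blast
    show "\<forall>i. Suc i < length (tl (butlast t)) \<longrightarrow> {tl (butlast t) ! i, tl (butlast t) ! Suc i} \<in> E"
    proof (intro allI impI)
      fix i assume i: "Suc i < length (tl (butlast t))"
      then have "{t ! Suc i, t ! Suc (Suc i)} \<in> E" using c unfolding is_path_def by auto
      then show "{tl (butlast t) ! i, tl (butlast t) ! Suc i} \<in> E" using i
        by (simp add: nth_tl nth_butlast)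
    qed
    show "set (tl (butlast t)) = thread_inner cyc t" using False unfolding thread_inner_def internal_def by simp
    show "length (tl (butlast t)) + 1 \<ge> thread_edges cyc t"
      using False c unfolding thread_edges_def is_path_def by simp
  qed
qed

lemma main_ineq:
  assumes "finite V" "X \<subseteq> V"
    and pk: "\<exists>Q. P3_packing V E Q \<and> card Q = k div 3 \<and> (\<forall>S\<in>Q. S \<subseteq> X)"
  shows "lambda V E \<ge> lambda (del_verts V E X) (del_edges V E X) + k div 3"
proof -
  let ?V' = "del_verts V E X" and ?E' = "del_edges V E X"
  have fV': "finite ?V'" using assms(1) unfolding del_verts_def by simp
  obtain P where P: "P3_packing ?V' ?E' P" "card P = lambda ?V' ?E'"
    using lambda_attained[OF fV'] by blast
  obtain Q where Q: "P3_packing V E Q" "card Q = k div 3" "\<forall>S\<in>Q. S \<subseteq> X" using pk by blast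
  have fP: "finite P" using packing_finite[OF fV' P(1)] .
  have fQ: "finite Q" using packing_finite[OF assms(1) Q(1)] .
  have sub: "?E' \<subseteq> E" unfolding del_edges_def by blast
  have P1: "\<forall>S\<in>P. S \<subseteq> ?V' \<and> is_P3 ?E' S" and P2: "disjoint P"
    using P(1) unfolding P3_packing_def by simp_all
  have Q1: "\<forall>S\<in>Q. S \<subseteq> V \<and> is_P3 E S" and Q2: "disjoint Q"
    using Q(1) unfolding P3_packing_def by simp_all
  have Pd: "S \<subseteq> V - X \<and> is_P3 E S" if "S \<in> P" for S
  proof -
    have "S \<subseteq> ?V'" "is_P3 ?E' S" using P1 that by simp_all
    then show ?thesis using is_P3_mono[OF _ sub] unfolding del_verts_def by simp
  qed
  have ne: "S \<noteq> {}" if "S \<in> Q" for S using Q1 that is_P3_ne[of E S] by simp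
  have disj: "A \<inter> B = {}" if "A \<in> P" "B \<in> Q" for A B
  proof -
    have "A \<subseteq> V - X" using Pd[OF that(1)] by simp
    moreover have "B \<subseteq> X" using Q(3) that(2) by simp
    ultimately show ?thesis by fast
  qed
  have PQ: "P \<inter> Q = {}"
  proof (rule ccontr)
    assume "P \<inter> Q \<noteq> {}"
    then obtain S where "S \<in> P" "S \<in> Q" by fast
    then show False using disj[of S S] ne[of S] by simp
  qed
  have "P3_packing V E (P \<union> Q)"
    unfolding P3_packing_def
  proof (intro conjI)
    show "\<forall>S\<in>P \<union> Q. S \<subseteq> V \<and> is_P3 E S" using Pd Q1 by fast
    show "disjoint (P \<union> Q)"
    proof (rule disjoint_union[OF P2 Q2])
      show "\<Union>P \<inter> \<Union>Q = {}" using disj by fast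
    qed
  qed
  then have "card (P \<union> Q) \<le> lambda V E" by (rule lambda_ge[OF assms(1)])
  moreover have "card (P \<union> Q) = card P + card Q" using card_Un_disjoint[OF fP fQ PQ] .
  ultimately show ?thesis using P(2) Q(2) by simp
qed


theorem lemma3p1:
  fixes V :: "'a set" and E :: "'a set set" and s :: nat and cyc :: bool and t :: "'a list"
  assumes "graph V E" and "s \<ge> 3" and "thread V E cyc t"
  defines "V' \<equiv> del_verts V E (thread_inner cyc t)"
      and "E' \<equiv> del_edges V E (thread_inner cyc t)"
  shows "(s \<ge> 4 \<and> thread_edges cyc t \<ge> 4 \<longrightarrow>
            real (lambda V' E') \<ge> real (card V') / real (s + 1) \<longrightarrow>
            real (lambda V E) \<ge> real (card V) / real (s + 1))
       \<and> (s = 3 \<and> (\<exists>m::nat. m \<ge> 1 \<and> (card (thread_inner cyc t) = 3 * m \<or> card (thread_inner cyc t) = 3 * m + 1)) \<longrightarrow>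
            real (lambda V' E') \<ge> real (card V') / 4 \<longrightarrow>
            real (lambda V E) \<ge> real (card V) / 4)"
proof -
  let ?X = "thread_inner cyc t"
  have fV: "finite V" using assms(1) unfolding graph_def by simp
  obtain xs where xs: "distinct xs" "set xs \<subseteq> V" "\<forall>i. Suc i < length xs \<longrightarrow> {xs!i, xs!Suc i} \<in> E"
     "set xs = ?X" "length xs + 1 \<ge> thread_edges cyc t"
    using inner_list[OF assms(1,3)] by blast
  define k where "k = card ?X"
  have kl: "k = length xs" using distinct_card[OF xs(1)] xs(4) k_def by simp
  have pk: "\<exists>Q. P3_packing V E Q \<and> card Q = k div 3 \<and> (\<forall>S\<in>Q. S \<subseteq> ?X)"
    using list_packing[OF xs(1,2,3)] xs(4) kl by simp
  have XV: "?X \<subseteq> V" using xs by simp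
  have L: "lambda V E \<ge> lambda V' E' + k div 3"
    using main_ineq[OF fV XV pk] unfolding V'_def E'_def .
  have cV: "card V = card V' + k"
    unfolding V'_def del_verts_def k_def using card_Diff_subset[OF finite_subset[OF XV fV] XV]
      card_mono[OF fV XV] by simp
  have gen: "real (lambda V E) \<ge> real (card V) / real c"
    if c: "c > 0" "(k div 3) * c \<ge> k" "real (lambda V' E') \<ge> real (card V') / real c" for c :: nat
  proof -
    have "real (card V) / real c = real (card V') / real c + real k / real c"
      using cV by (simp add: add_divide_distrib)
    also have "real k / real c \<le> real (k div 3)"
    proof -
      have "real k \<le> real (k div 3) * real c" using c(2) by (metis of_nat_le_iff of_nat_mult)
      then show ?thesis using c(1) by (simp add: divide_le_eq)
    qed
    then have "real (card V') / real c + real k / real c \<le> real (lambda V' E') + real (k div 3)"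
      using c(3) by linarith
    also have "\<dots> \<le> real (lambda V E)" using L by linarith
    finally show ?thesis by simp
  qed
  show ?thesis
  proof (intro conjI impI)
    assume h: "4 \<le> s \<and> 4 \<le> thread_edges cyc t" "real (card V') / real (s + 1) \<le> real (lambda V' E')"
    have k3: "k \<ge> 3" using h(1) xs(5) kl by simp
    have dm: "k = 3 * (k div 3) + k mod 3" using div_mult_mod_eq[of k 3] by linarith
    have "k mod 3 < 3" by simp
    moreover have "1 \<le> k div 3" using div_le_mono[OF k3, of 3] by simp
    ultimately have "(k div 3) * 5 \<ge> k" using dm by linarith
    moreover have "(k div 3) * 5 \<le> (k div 3) * (s+1)" using h(1) by simp
    ultimately have kk: "k \<le> (k div 3) * (s+1)" by linarith
    have pos: "0 < s + 1" by simp
    show "real (card V) / real (s + 1) \<le> real (lambda V E)"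
      by (rule gen[OF pos kk]) (use h(2) in simp)
  next
    assume h: "s = 3 \<and> (\<exists>m\<ge>1. card ?X = 3 * m \<or> card ?X = 3 * m + 1)"
       "real (card V') / 4 \<le> real (lambda V' E')"
    then obtain m where m: "m \<ge> 1" "k = 3*m \<or> k = 3*m+1" using k_def by blast
    have "k div 3 = m" using m(2) by auto
    then have "(k div 3) * 4 \<ge> k" using m by auto
    then have kk: "k \<le> (k div 3) * 4" by simp
    have pos: "0 < (4::nat)" by simp
    show "real (card V) / 4 \<le> real (lambda V E)"
      using gen[OF pos kk] h(2) by simp
  qed
qed

end
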